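(* Let $m\ge 2$ be an integer such that $p_1(x)=x^{m+1}+x+1$ is irreducible over $\mathrm{GF}(2)$, and let $F=\mathrm{GF}(2^{m+1})=\mathrm{GF}(2)[x]/(p_1(x))$, whose elements are identified with the polynomials over $\mathrm{GF}(2)$ of degree at most $m$. Let $D_0$ be the multiplication table of $F$ (rows and columns indexed by the elements of $F$, entry in row $a$ and column $b$ equal to $ab$ computed in $F$). Let $D_1$ be the $2^{m+1}\times 4$ submatrix of $D_0$ consisting of the columns indexed by $0,1,x,x+1$, and let $D_2$ be the submatrix of $D_1$ consisting of the $2^m$ rows indexed by the elements of $r_{m-2}\cup\big(x^m+x^{m-1}+r_{m-2}\big)$. Then: (i) $D_1$ is a difference matrix $D(2^{m+1},2^2,2^{m+1})$ over the additive group of $F$; (ii) $\phi(D_2)$ is a difference matrix $D(2^m,2^2,2^m)$ over the additive group of $\mathrm{GF}(2^m)$.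
   Context: $r_{m-2}$ denotes the set of all polynomials over $\mathrm{GF}(2)$ of degree at most $m-2$, and $q+S=\{q+s:s\in S\}$. A difference matrix $D(b,c,g)$ over a finite abelian group $\mathcal{A}$ of order $g$ is a $b\times c$ array with entries in $\mathcal{A}$ such that, for any two distinct columns, their entrywise difference vector contains every element of $\mathcal{A}$ equally often. Elements of $\mathrm{GF}(2^m)$ are identified (as an additive group) with polynomials over $\mathrm{GF}(2)$ of degree at most $m-1$. The truncation projection $\phi$ maps $a_0+a_1x+\cdots+a_mx^m\in F$ to $a_0+a_1x+\cdots+a_{m-1}x^{m-1}$; for an array $D$, $\phi(D)$ is obtained by applying $\phi$ entrywise. *)

theory Defs
  imports "HOL-Library.Z2" "HOL-Computational_Algebra.Polynomial"
begin

text \<open>A difference matrix D(b,c,g): rows indexed by the finite set R (b rows),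
columns by the finite set C (c columns), entries in the finite additive group A
(a subgroup of the ambient additive group, of order g); for any two distinct
columns the difference vector contains every element of A equally often.\<close>
definition diff_matrix ::
  "'r set \<Rightarrow> 'c set \<Rightarrow> ('r \<Rightarrow> 'c \<Rightarrow> 'a::ab_group_add) \<Rightarrow> 'a set \<Rightarrow> nat \<Rightarrow> nat \<Rightarrow> nat \<Rightarrow> bool"
  where "diff_matrix R C D A b c g \<longleftrightarrow>
    finite R \<and> finite C \<and> finite A \<and> card R = b \<and> card C = c \<and> card A = g \<and>
    (\<forall>r\<in>R. \<forall>j\<in>C. D r j \<in> A) \<and>
    (\<forall>j\<in>C. \<forall>k\<in>C. j \<noteq> k \<longrightarrow>
       (\<forall>u\<in>A. \<forall>v\<in>A. card {r\<in>R. D r j - D r k = u} = card {r\<in>R. D r j - D r k = v}))"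

definition polys_upto :: "nat \<Rightarrow> bit poly set"
  where "polys_upto n = {p. degree p \<le> n}"

definition trunc_phi :: "nat \<Rightarrow> bit poly \<Rightarrow> bit poly"
  where "trunc_phi m p = (\<Sum>i<m. monom (coeff p i) i)"

definition p1 :: "nat \<Rightarrow> bit poly"
  where "p1 m = monom 1 (m + 1) + [:1, 1:]"

definition D0 :: "nat \<Rightarrow> bit poly \<Rightarrow> bit poly \<Rightarrow> bit poly"
  where "D0 m a b = (a * b) mod p1 m"

end

theory Submission
  imports Defs "HOL-Computational_Algebra.Polynomial_Factorial"
begin

lemma bit_cases2: "(b::bit) = 0 \<or> b = 1" by (cases b) simp_all

lemma polys_upto_Suc:
  "polys_upto (Suc n) = polys_upto n \<union> (\<lambda>q. monom 1 (Suc n) + q) ` polys_upto n"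
proof (intro equalityI subsetI)
  fix p assume p: "p \<in> polys_upto (Suc n)"
  show "p \<in> polys_upto n \<union> (\<lambda>q. monom 1 (Suc n) + q) ` polys_upto n"
  proof (cases "coeff p (Suc n) = 0")
    case True
    then have "degree p \<le> n" using p unfolding polys_upto_def
      proof (intro degree_le allI impI)
      fix i assume "n < i"
      show "coeff p i = 0"
      proof (cases "i = Suc n")
        case False with \<open>n < i\<close> have "Suc n < i" by simp
        then show ?thesis using p unfolding polys_upto_def by (intro coeff_eq_0) simp
      qed (use True in simp)
    qed
    then show ?thesis by (simp add: polys_upto_def)
  next
    case False
    then have c: "coeff p (Suc n) = 1" by simp
    have "degree (p - monom 1 (Suc n)) \<le> n"
      using p c unfolding polys_upto_def
      by (intro degree_le) (auto simp: coeff_monom intro: coeff_eq_0)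
    moreover have "p = monom 1 (Suc n) + (p - monom 1 (Suc n))" by simp
    ultimately show ?thesis unfolding polys_upto_def by blast
  qed
next
  fix p assume "p \<in> polys_upto n \<union> (\<lambda>q. monom 1 (Suc n) + q) ` polys_upto n"
  then show "p \<in> polys_upto (Suc n)" unfolding polys_upto_def
    by (auto intro!: degree_add_le order.trans[OF degree_monom_le])
qed

lemma polys_upto_0: "polys_upto 0 = {0, 1}"
proof (intro equalityI subsetI)
  fix p assume "p \<in> polys_upto 0"
  then have "p = [:coeff p 0:]" unfolding polys_upto_def by (simp add: degree_0_id[symmetric])
  then show "p \<in> {0,1}" using bit_cases2[of "coeff p 0"] by (auto simp: one_pCons)
qed (auto simp: polys_upto_def)

lemma card_polys_upto: "finite (polys_upto n) \<and> card (polys_upto n) = 2 ^ (n+1)"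
proof (induction n)
  case 0 then show ?case by (simp add: polys_upto_0)
next
  case (Suc n)
  have d: "polys_upto n \<inter> (\<lambda>q. monom 1 (Suc n) + q) ` polys_upto n = {}"
  proof -
    { fix q assume "q \<in> polys_upto n" "monom 1 (Suc n) + q \<in> polys_upto n"
      then have "coeff (monom 1 (Suc n) + q) (Suc n) = 0" "coeff q (Suc n) = 0"
        unfolding polys_upto_def by (auto intro!: coeff_eq_0 simp del: coeff_add)
      then have False by (simp add: coeff_monom) }
    then show ?thesis by blast
  qed
  have i: "inj_on (\<lambda>q. monom 1 (Suc n) + q) (polys_upto n)" by (auto simp: inj_on_def)
  show ?case using Suc d i
    by (simp add: polys_upto_Suc card_Un_disjoint card_image)
qed

lemma x_plus_1: "[:0,1:] + 1 = [:1::bit,1:]" by (simp add: one_pCons)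

lemma polys_upto_1: "polys_upto 1 = {0, 1, [:0,1:], [:1,1:]}"
proof -
  have e: "monom (1::bit) (Suc 0) = [:0,1:]" using monom_Suc[of "1::bit" 0] by (simp add: monom_0)
  have "polys_upto (Suc 0) = {0, 1, [:0,1:], [:1,1:]}"
    unfolding polys_upto_Suc polys_upto_0 e
    using x_plus_1 by auto
  then show ?thesis by simp
qed

lemma monom_1_1: "monom 1 1 = [:0, 1:]" using monom_Suc[of 1 0] by (simp add: monom_0)

lemma deg_p1: "m \<ge> 1 \<Longrightarrow> degree (p1 m) = m + 1"
proof -
  assume "m \<ge> 1"
  then have "degree [:1, 1::bit:] < degree (monom (1::bit) (m+1))" by (simp add: degree_monom_eq)
  then show ?thesis unfolding p1_def by (simp add: degree_add_eq_left degree_monom_eq)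
qed

lemma p1_ne0: "m \<ge> 1 \<Longrightarrow> p1 m \<noteq> 0"
  using deg_p1[of m] by auto


lemma mod_in: "m \<ge> 1 \<Longrightarrow> x mod p1 m \<in> polys_upto m"
  using degree_mod_less[OF p1_ne0, of m x] deg_p1[of m] by (auto simp: polys_upto_def)

lemma mod_diff_small: "m \<ge> 1 \<Longrightarrow> a mod p1 m - b mod p1 m = (a - b) mod p1 m"
proof -
  assume m: "m \<ge> 1"
  have "degree (a mod p1 m - b mod p1 m) < degree (p1 m)"
    using m mod_in[of m a] mod_in[of m b] deg_p1[of m]
      degree_diff_le[of "a mod p1 m" m "b mod p1 m"]
    by (auto simp: polys_upto_def)
  then have "a mod p1 m - b mod p1 m = (a mod p1 m - b mod p1 m) mod p1 m"
    by (simp add: mod_poly_less)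
  also have "\<dots> = (a - b) mod p1 m" by (rule mod_diff_eq)
  finally show ?thesis .
qed

lemma dvd_cancel_lin:
  assumes a: "poly (p1 m) a \<noteq> 0" and dv: "p1 m dvd t * [:-a, 1:]"
  shows "p1 m dvd t"
proof -
  obtain c where c: "t * [:-a, 1:] = p1 m * c" using dv by (auto elim: dvdE)
  have "poly (p1 m) a * poly c a = 0" using arg_cong[OF c, of "\<lambda>q. poly q a"] by simp
  then have "poly c a = 0" using a by simp
  then obtain c' where c': "c = [:-a, 1:] * c'" by (auto simp: poly_eq_0_iff_dvd elim: dvdE)
  have "t * [:-a, 1:] = (p1 m * c') * [:-a, 1:]" using c c' by (simp add: algebra_simps)
  moreover have "[:-a, 1:] \<noteq> 0" by simp
  ultimately have "t = p1 m * c'" using mult_cancel_right by blast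
  then show ?thesis by simp
qed

lemma poly_p1_0: "poly (p1 m) 0 = 1" by (simp add: p1_def poly_monom)
lemma poly_p1_1: "poly (p1 m) 1 = 1" by (simp add: p1_def poly_monom)

lemma dvd_zero:
  assumes m: "m \<ge> 1" and d: "d \<noteq> 0" "d \<in> polys_upto 1"
    and t: "t \<in> polys_upto m" and dv: "p1 m dvd t * d"
  shows "t = 0"
proof -
  have "p1 m dvd t"
  proof -
    have "d = 1 \<or> d = [:0,1:] \<or> d = [:1,1:]" using d polys_upto_1 by auto
    moreover
    { assume "d = [:0,1:]"
      then have "d = [:-0, 1:]" by simp
      then have ?thesis using dvd_cancel_lin[of m 0 t] poly_p1_0[of m] dv by simp }
    moreover
    { assume "d = [:1,1:]"
      then have "d = [:-1, 1:]" by simp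
      then have ?thesis using dvd_cancel_lin[of m 1 t] poly_p1_1[of m] dv by simp }
    ultimately show ?thesis using dv by auto
  qed
  then show "t = 0"
    using dvd_imp_degree_le[of "p1 m" t] t deg_p1[of m] m by (force simp: polys_upto_def)
qed

lemma mod_inj:
  assumes m: "m \<ge> 1" and d: "d \<noteq> 0" "d \<in> polys_upto 1"
    and t: "t \<in> polys_upto m" "t' \<in> polys_upto m"
    and eq: "(t * d) mod p1 m = (t' * d) mod p1 m"
  shows "t = t'"
proof -
  have "((t - t') * d) mod p1 m = 0"
    using mod_diff_small[OF m, of "t*d" "t'*d"] eq by (simp add: algebra_simps)
  then have "p1 m dvd (t - t') * d" by (simp add: mod_eq_0_iff_dvd)
  moreover have "t - t' \<in> polys_upto m"
    using t degree_diff_le[of t m t'] by (auto simp: polys_upto_def)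
  ultimately have "t - t' = 0" using dvd_zero[OF m d] by blast
  then show ?thesis by simp
qed

lemma card_one:
  assumes "inj_on f R" "f ` R \<subseteq> A" "finite A" "card R = card A" "u \<in> A"
  shows "card {r\<in>R. f r = u} = 1"
proof -
  have "card (f ` R) = card A" using assms by (simp add: card_image)
  then have "f ` R = A" using assms card_subset_eq by blast
  then obtain r where r: "r \<in> R" "f r = u" using assms(5) by blast
  then have "{r\<in>R. f r = u} = {r}" using assms(1) by (auto simp: inj_on_def)
  then show ?thesis by simp
qed

lemma coeff_trunc: "coeff (trunc_phi m p) i = (if i < m then coeff p i else 0)"
  unfolding trunc_phi_def by (simp add: coeff_sum coeff_monom)

lemma trunc_diff: "trunc_phi m (a - b) = trunc_phi m a - trunc_phi m b"
  by (simp add: poly_eq_iff coeff_trunc)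

lemma trunc_in: "m \<ge> 1 \<Longrightarrow> trunc_phi m p \<in> polys_upto (m - 1)"
  unfolding polys_upto_def by (auto intro!: degree_le simp: coeff_trunc)

lemma monom_m_in: "monom 1 k \<in> polys_upto m \<longleftrightarrow> k \<le> m"
  by (simp add: polys_upto_def degree_monom_eq)

lemma t0_exists:
  assumes m: "m \<ge> 2" and d: "d \<noteq> 0" "d \<in> polys_upto 1"
  shows "\<exists>t0\<in>polys_upto m. (t0 * d) mod p1 m = monom 1 m \<and> coeff t0 m \<noteq> coeff t0 (m - 1)"
proof -
  have m1: "m \<ge> 1" using m by simp
  have small: "monom 1 m mod p1 m = monom 1 m"
    using deg_p1[OF m1] by (intro mod_poly_less) (simp add: degree_monom_eq)
  have "d = 1 \<or> d = [:0,1:] \<or> d = [:1,1:]" using d polys_upto_1 by auto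
  moreover
  { assume dd: "d = 1"
    have ?thesis
      by (rule bexI[of _ "monom 1 m"]) (use m small dd in \<open>auto simp: monom_m_in coeff_monom\<close>) }
  moreover
  { assume dd: "d = [:0,1:]"
    have "monom 1 (m - 1) * [:0,1:] = monom (1::bit) m"
      using m by (simp add: monom_1_1[symmetric] mult_monom)
    then have ?thesis
      by (intro bexI[of _ "monom 1 (m - 1)"]) (use m small dd in \<open>auto simp: monom_m_in coeff_monom\<close>) }
  moreover
  { assume dd: "d = [:1,1:]"
    have e1: "[:1,1:] = 1 + [:0, 1::bit:]" by (simp add: x_plus_1[symmetric] add.commute)
    have ide: "(monom 1 m + 1) * [:1,1:] = p1 m + monom (1::bit) m"
      unfolding p1_def e1 monom_1_1[symmetric] by (simp add: algebra_simps mult_monom)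
    have "((monom 1 m + 1) * d) mod p1 m = (p1 m + monom 1 m) mod p1 m" by (simp only: dd ide)
    also have "\<dots> = monom 1 m mod p1 m" by (rule mod_add_self1)
    finally have "((monom 1 m + 1) * d) mod p1 m = monom 1 m" using small by simp
    moreover have "monom 1 m + 1 \<in> polys_upto m"
      using degree_add_le[of "monom (1::bit) m" m 1] by (simp add: polys_upto_def degree_monom_eq)
    moreover have "coeff (monom 1 m + 1) m \<noteq> coeff (monom (1::bit) m + 1) (m - 1)"
      using m by (simp add: coeff_monom coeff_1)
    ultimately have ?thesis by blast }
  ultimately show ?thesis by blast
qed

definition R2 :: "nat \<Rightarrow> bit poly set" where
  "R2 m = polys_upto (m - 2) \<union> ((\<lambda>s. monom 1 m + monom 1 (m - 1) + s) ` polys_upto (m - 2))"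

lemma R2_sub: "m \<ge> 2 \<Longrightarrow> R2 m \<subseteq> polys_upto m"
  unfolding R2_def polys_upto_def
  by (auto intro!: degree_add_le order.trans[OF degree_monom_le])

lemma R2_coeff: assumes m: "m \<ge> 2" and r: "r \<in> R2 m" shows "coeff r m = coeff r (m - 1)"
  using r unfolding R2_def
proof (elim UnE imageE)
  assume "r \<in> polys_upto (m - 2)"
  then have "coeff r m = 0" "coeff r (m - 1) = 0" using m
    by (auto simp: polys_upto_def intro!: coeff_eq_0)
  then show ?thesis by simp
next
  fix s assume rs: "r = monom 1 m + monom 1 (m - 1) + s" and s: "s \<in> polys_upto (m - 2)"
  then have "coeff s m = 0" "coeff s (m - 1) = 0" using m
    by (auto simp: polys_upto_def intro!: coeff_eq_0)
  then show ?thesis using rs m by (simp add: coeff_monom)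
qed

lemma R2_card: assumes m: "m \<ge> 2" shows "finite (R2 m) \<and> card (R2 m) = 2 ^ m"
proof -
  let ?S = "(\<lambda>s. monom 1 m + monom 1 (m - 1) + s) ` polys_upto (m - 2)"
  have fin: "finite (polys_upto (m - 2))" "card (polys_upto (m - 2)) = 2 ^ (m - 1)"
    using card_polys_upto[of "m - 2"] m by (auto simp: Suc_diff_Suc numeral_2_eq_2)
  have i: "inj_on (\<lambda>s. monom 1 m + monom 1 (m - 1) + s) (polys_upto (m - 2))"
    by (auto simp: inj_on_def)
  have dj: "polys_upto (m - 2) \<inter> ?S = {}"
  proof -
    { fix s assume s: "s \<in> polys_upto (m - 2)" "monom 1 m + monom 1 (m - 1) + s \<in> polys_upto (m - 2)"
      then have "coeff (monom 1 m + monom 1 (m - 1) + s) m = 0" "coeff s m = 0"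
        using m by (auto simp: polys_upto_def intro!: coeff_eq_0 simp del: coeff_add)
      then have False using m by (simp add: coeff_monom split: if_splits) }
    then show ?thesis by blast
  qed
  have "card (R2 m) = 2 ^ (m - 1) + 2 ^ (m - 1)"
    unfolding R2_def using fin i dj by (simp add: card_Un_disjoint card_image)
  also have "\<dots> = 2 ^ m" using m by (cases m) auto
  finally show ?thesis using fin unfolding R2_def by simp
qed

lemma R2_inj:
  assumes m: "m \<ge> 2" and d: "d \<noteq> 0" "d \<in> polys_upto 1"
    and r: "r \<in> R2 m" "r' \<in> R2 m"
    and eq: "trunc_phi m ((r * d) mod p1 m) = trunc_phi m ((r' * d) mod p1 m)"
  shows "r = r'"
proof -
  have m1: "m \<ge> 1" using m by simp
  define t where "t = r - r'"
  have tin: "t \<in> polys_upto m" using R2_sub[OF m] r degree_diff_le[of r m r']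
    by (auto simp: t_def polys_upto_def)
  have tc: "coeff t m = coeff t (m - 1)" using R2_coeff[OF m r(1)] R2_coeff[OF m r(2)]
    by (simp add: t_def)
  define q where "q = (t * d) mod p1 m"
  have q: "q = (r * d) mod p1 m - (r' * d) mod p1 m"
    unfolding q_def t_def mod_diff_small[OF m1] by (simp add: algebra_simps)
  have tq: "trunc_phi m q = 0" using eq by (simp add: q trunc_diff)
  have qin: "q \<in> polys_upto m" unfolding q_def by (rule mod_in[OF m1])
  have qm: "q = monom (coeff q m) m"
  proof (rule poly_eqI)
    fix i show "coeff q i = coeff (monom (coeff q m) m) i"
    proof (cases "i < m")
      case True
      then show ?thesis using arg_cong[OF tq, of "\<lambda>p. coeff p i"] by (simp add: coeff_trunc coeff_monom)
    next
      case False
      then show ?thesis using qin by (cases "i = m") (auto simp: coeff_monom polys_upto_def intro!: coeff_eq_0)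
    qed
  qed
  show ?thesis
  proof (cases "coeff q m = 0")
    case True
    then have "(t * d) mod p1 m = (0 * d) mod p1 m" using qm by (simp add: q_def)
    then have "t = 0" using mod_inj[OF m1 d tin, of 0] by (simp add: polys_upto_def)
    then show ?thesis by (simp add: t_def)
  next
    case False
    then have "coeff q m = 1" by simp
    then have q1: "(t * d) mod p1 m = monom 1 m" using qm by (simp add: q_def)
    obtain t0 where t0: "t0 \<in> polys_upto m" "(t0 * d) mod p1 m = monom 1 m"
      "coeff t0 m \<noteq> coeff t0 (m - 1)" using t0_exists[OF m d] by blast
    have "t = t0" using mod_inj[OF m1 d tin t0(1)] q1 t0(2) by simp
    then show ?thesis using tc t0(3) by simp
  qed
qed

lemma diff_in_1: "j \<in> polys_upto 1 \<Longrightarrow> k \<in> polys_upto 1 \<Longrightarrow> j - k \<in> polys_upto 1"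
  using degree_diff_le[of j 1 k] by (simp add: polys_upto_def)

lemma D0_diff: "m \<ge> 1 \<Longrightarrow> D0 m r j - D0 m r k = (r * (j - k)) mod p1 m"
  unfolding D0_def by (simp add: mod_diff_small right_diff_distrib)

theorem theorem1:
  fixes m :: nat
  assumes "m \<ge> 2" and "irreducible (p1 m)"
  shows "diff_matrix (polys_upto m) {0, 1, [:0, 1:], [:1, 1:]} (D0 m) (polys_upto m)
           (2 ^ (m + 1)) (2 ^ 2) (2 ^ (m + 1)) \<and>
         diff_matrix
           (polys_upto (m - 2) \<union> ((\<lambda>s. monom 1 m + monom 1 (m - 1) + s) ` polys_upto (m - 2)))
           {0, 1, [:0, 1:], [:1, 1:]} (\<lambda>a b. trunc_phi m (D0 m a b)) (polys_upto (m - 1))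
           (2 ^ m) (2 ^ 2) (2 ^ m)"
proof -
  have m: "m \<ge> 2" by fact
  have m1: "m \<ge> 1" using m by simp
  have C: "{0, 1, [:0, 1:], [:1, 1:]} = polys_upto 1" by (rule polys_upto_1[symmetric])
  have Cc: "finite (polys_upto 1)" "card (polys_upto 1) = 2 ^ 2"
    using card_polys_upto[of 1] by auto
  have Pm: "finite (polys_upto m)" "card (polys_upto m) = 2 ^ (m + 1)"
    using card_polys_upto[of m] by auto
  have Pm1: "finite (polys_upto (m - 1))" "card (polys_upto (m - 1)) = 2 ^ m"
    using card_polys_upto[of "m - 1"] m by auto
  have part1: "diff_matrix (polys_upto m) (polys_upto 1) (D0 m) (polys_upto m)
           (2 ^ (m + 1)) (2 ^ 2) (2 ^ (m + 1))"
    unfolding diff_matrix_def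
  proof (intro conjI ballI impI Cc Pm)
    fix r j assume "r \<in> polys_upto m" show "D0 m r j \<in> polys_upto m"
      unfolding D0_def by (rule mod_in[OF m1])
  next
    fix j k u v assume jk: "j \<in> polys_upto 1" "k \<in> polys_upto 1" "j \<noteq> k"
      and uv: "u \<in> polys_upto m" "v \<in> polys_upto m"
    let ?d = "j - k"
    have d: "?d \<noteq> 0" "?d \<in> polys_upto 1" using jk diff_in_1 by auto
    have f: "\<And>r. D0 m r j - D0 m r k = (r * ?d) mod p1 m" by (rule D0_diff[OF m1])
    have inj: "inj_on (\<lambda>r. (r * ?d) mod p1 m) (polys_upto m)"
      by (auto simp: inj_on_def intro: mod_inj[OF m1 d])
    have im: "(\<lambda>r. (r * ?d) mod p1 m) ` polys_upto m \<subseteq> polys_upto m" using mod_in[OF m1] by auto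
    have "\<And>w. w \<in> polys_upto m \<Longrightarrow> card {r\<in>polys_upto m. D0 m r j - D0 m r k = w} = 1"
      unfolding f by (rule card_one[OF inj im Pm(1) refl])
    then show "card {r\<in>polys_upto m. D0 m r j - D0 m r k = u} = card {r\<in>polys_upto m. D0 m r j - D0 m r k = v}"
      using uv by simp
  qed
  have R2c: "finite (R2 m)" "card (R2 m) = 2 ^ m" using R2_card[OF m] by auto
  have part2: "diff_matrix (R2 m) (polys_upto 1) (\<lambda>a b. trunc_phi m (D0 m a b)) (polys_upto (m - 1))
           (2 ^ m) (2 ^ 2) (2 ^ m)"
    unfolding diff_matrix_def
  proof (intro conjI ballI impI Cc Pm1 R2c)
    fix r j assume "r \<in> R2 m" show "trunc_phi m (D0 m r j) \<in> polys_upto (m - 1)"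
      by (rule trunc_in[OF m1])
  next
    fix j k u v assume jk: "j \<in> polys_upto 1" "k \<in> polys_upto 1" "j \<noteq> k"
      and uv: "u \<in> polys_upto (m - 1)" "v \<in> polys_upto (m - 1)"
    let ?d = "j - k"
    have d: "?d \<noteq> 0" "?d \<in> polys_upto 1" using jk diff_in_1 by auto
    have f: "\<And>r. trunc_phi m (D0 m r j) - trunc_phi m (D0 m r k) = trunc_phi m ((r * ?d) mod p1 m)"
      by (simp add: trunc_diff[symmetric] D0_diff[OF m1])
    have inj: "inj_on (\<lambda>r. trunc_phi m ((r * ?d) mod p1 m)) (R2 m)"
      by (auto simp: inj_on_def intro: R2_inj[OF m d])
    have im: "(\<lambda>r. trunc_phi m ((r * ?d) mod p1 m)) ` R2 m \<subseteq> polys_upto (m - 1)"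
      using trunc_in[OF m1] by auto
    have "\<And>w. w \<in> polys_upto (m - 1) \<Longrightarrow>
        card {r\<in>R2 m. trunc_phi m (D0 m r j) - trunc_phi m (D0 m r k) = w} = 1"
      unfolding f by (rule card_one[OF inj im Pm1(1)]) (use R2c Pm1 in auto)
    then show "card {r\<in>R2 m. trunc_phi m (D0 m r j) - trunc_phi m (D0 m r k) = u} =
               card {r\<in>R2 m. trunc_phi m (D0 m r j) - trunc_phi m (D0 m r k) = v}"
      using uv by simp
  qed
  show ?thesis using part1 part2 unfolding C R2_def by simp
qed

end
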